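(* For the iterates defined below, $$\|v_n\|_2\ge\sqrt{\eta}\cdot\Big(\sum_{i=1}^n\langle\phi(x_i),v_{i-1}\rangle^2\Big)^{1/2}.$$
   Context: Setting: $\phi(x_1),\dots,\phi(x_n)\in\mathbb{R}^d$ are feature vectors of samples $x_1,\dots,x_n$; $\eta\in(0,0.1)$ is a learning rate; $v_0\in\mathbb{R}^d$ is nonzero and $v_i=v_{i-1}+\eta\langle\phi(x_i),v_{i-1}\rangle\phi(x_i)$ for $i\in[n]$. *)

theory Defs
  imports "HOL-Analysis.Analysis"
begin

text \<open>Iterates: v 0 = v0, v i = v (i-1) + eta * <phi i, v (i-1)> * phi i,
  where phi i stands for the feature vector phi(x_i), i = 1..n.\<close>
primrec iterate :: "real \<Rightarrow> (nat \<Rightarrow> 'a::real_inner) \<Rightarrow> 'a \<Rightarrow> nat \<Rightarrow> 'a" where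
  "iterate \<eta> \<phi> v0 0 = v0"
| "iterate \<eta> \<phi> v0 (Suc i) =
     iterate \<eta> \<phi> v0 i + (\<eta> * (\<phi> (Suc i) \<bullet> iterate \<eta> \<phi> v0 i)) *\<^sub>R \<phi> (Suc i)"

end

theory Submission
  imports Defs
begin

lemma sq_bound:
  fixes \<phi> :: "nat \<Rightarrow> 'a::euclidean_space"
  assumes "0 < \<eta>"
  shows "(norm (iterate \<eta> \<phi> v0 n))\<^sup>2 \<ge> \<eta> * (\<Sum>i=1..n. (\<phi> i \<bullet> iterate \<eta> \<phi> v0 (i - 1))\<^sup>2)"
proof (induction n)
  case 0
  then show ?case by simp
next
  case (Suc n)
  define v where "v = iterate \<eta> \<phi> v0 n"
  define p where "p = \<phi> (Suc n)"
  define a where "a = p \<bullet> v"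
  have e: "(norm (v + (\<eta> * a) *\<^sub>R p))\<^sup>2 = (norm v)\<^sup>2 + 2 * \<eta> * a\<^sup>2 + (\<eta> * a)\<^sup>2 * (norm p)\<^sup>2"
    unfolding power2_norm_eq_inner a_def
    by (simp add: inner_add_left inner_add_right inner_commute algebra_simps power2_eq_square)
  have "(norm (v + (\<eta> * a) *\<^sub>R p))\<^sup>2 \<ge> (norm v)\<^sup>2 + \<eta> * a\<^sup>2"
    using e assms by (simp add: zero_le_mult_iff)
  moreover have "(norm v)\<^sup>2 \<ge> \<eta> * (\<Sum>i=1..n. (\<phi> i \<bullet> iterate \<eta> \<phi> v0 (i - 1))\<^sup>2)"
    using Suc v_def by simp
  ultimately show ?case
    by (simp add: v_def p_def a_def distrib_left inner_commute)
qed

theorem lemmaC7: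
  fixes \<phi> :: "nat \<Rightarrow> 'a::euclidean_space" and v0 :: 'a and \<eta> :: real and n :: nat
  assumes "0 < \<eta>" and "\<eta> < 0.1" and "v0 \<noteq> 0"
  shows "norm (iterate \<eta> \<phi> v0 n)
           \<ge> sqrt \<eta> * sqrt (\<Sum>i=1..n. (\<phi> i \<bullet> iterate \<eta> \<phi> v0 (i - 1))\<^sup>2)"
proof -
  have "sqrt \<eta> * sqrt (\<Sum>i=1..n. (\<phi> i \<bullet> iterate \<eta> \<phi> v0 (i - 1))\<^sup>2)
      = sqrt (\<eta> * (\<Sum>i=1..n. (\<phi> i \<bullet> iterate \<eta> \<phi> v0 (i - 1))\<^sup>2))"
    by (simp add: real_sqrt_mult)
  also have "\<dots> \<le> sqrt ((norm (iterate \<eta> \<phi> v0 n))\<^sup>2)"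
    using sq_bound[OF assms(1)] real_sqrt_le_mono by blast
  also have "\<dots> = norm (iterate \<eta> \<phi> v0 n)" by simp
  finally show ?thesis .
qed

end
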